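(* Let $\varphi,\psi\in G$ satisfy $\gamma_{\psi/\varphi}>0$, and let $E$ and $F$ be symmetric spaces on $[0,1]$ with fundamental functions $\varphi$ and $\psi$, respectively. Then $E\subset F$ and the identity inclusion operator $I:E\to F$ is disjointly strictly singular.
   Context: All functions are Lebesgue measurable on $[0,1]$, $\mu$ is Lebesgue measure. A symmetric space (SS) on $[0,1]$ is a Banach space $E$ of measurable functions on $[0,1]$ such that: (1) if $y\in E$ and $|x(t)|\le |y(t)|$ then $x\in E$ and $\|x\|\le\|y\|$; (2) if $y\in E$ and $x,y$ are equimeasurable (i.e. $\mu\{|x|>\tau\}=\mu\{|y|>\tau\}$ for all $\tau>0$) then $x\in E$ and $\|x\|=\|y\|$. The fundamental function of $E$ is $f_E(t)=\|\chi_{(0,t)}\|_E$. $G$ denotes the class of all positive increasing concave functions on $(0,1]$. For a positive function $f$ on $(0,1]$, its dilation function is $\mathcal M_f(t)=\sup\{f(st)/f(s):0<s\le\min(1,1/t)\}$ for $t>0$, and its lower dilation index is $\gamma_f=\lim_{t\to0}\ln\mathcal M_f(t)/\ln t$. A bounded linear operator $T$ from a Banach lattice $X$ into a Banach space $Y$ is disjointly strictly singular (DSS) if there is no sequence of nonzero pairwise disjoint elements $x_n\in X$ such that the restriction of $T$ to their closed linear span $[x_n]$ is an isomorphism (onto its image). *)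

theory Defs
  imports "HOL-Analysis.Analysis"
begin

abbreviation mu01 :: "real measure" where
  "mu01 \<equiv> lebesgue_on {0..1}"

text \<open>A symmetric space on [0,1] is given by a set E of (representatives of)
  measurable real functions together with a norm N on E (functions equal a.e.
  are identified via the norm).\<close>
definition symmetric_space :: "(real \<Rightarrow> real) set \<Rightarrow> ((real \<Rightarrow> real) \<Rightarrow> real) \<Rightarrow> bool" where
  "symmetric_space E N \<longleftrightarrow>
     E \<subseteq> borel_measurable mu01 \<and>
     (\<lambda>t. 0) \<in> E \<and>
     (\<forall>x\<in>E. \<forall>y\<in>E. (\<lambda>t. x t + y t) \<in> E) \<and>
     (\<forall>x\<in>E. \<forall>c::real. (\<lambda>t. c * x t) \<in> E) \<and>
     (\<forall>x\<in>E. \<forall>y\<in>E. N (\<lambda>t. x t + y t) \<le> N x + N y) \<and>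
     (\<forall>x\<in>E. \<forall>c::real. N (\<lambda>t. c * x t) = \<bar>c\<bar> * N x) \<and>
     (\<forall>x\<in>E. N x = 0 \<longleftrightarrow> (AE t in mu01. x t = 0)) \<and>
     \<comment> \<open>completeness (Banach space)\<close>
     (\<forall>u::nat \<Rightarrow> real \<Rightarrow> real. (\<forall>n. u n \<in> E) \<longrightarrow>
        (\<forall>e>0. \<exists>M. \<forall>m\<ge>M. \<forall>n\<ge>M. N (\<lambda>t. u m t - u n t) < e) \<longrightarrow>
        (\<exists>x\<in>E. (\<lambda>n. N (\<lambda>t. u n t - x t)) \<longlonglongrightarrow> 0)) \<and>
     \<comment> \<open>(1) ideal property\<close>
     (\<forall>x y. y \<in> E \<longrightarrow> x \<in> borel_measurable mu01 \<longrightarrow>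
        (AE t in mu01. \<bar>x t\<bar> \<le> \<bar>y t\<bar>) \<longrightarrow> x \<in> E \<and> N x \<le> N y) \<and>
     \<comment> \<open>(2) rearrangement invariance\<close>
     (\<forall>x y. y \<in> E \<longrightarrow> x \<in> borel_measurable mu01 \<longrightarrow>
        (\<forall>\<tau>>0. measure mu01 {t\<in>{0..1}. \<bar>x t\<bar> > \<tau>} = measure mu01 {t\<in>{0..1}. \<bar>y t\<bar> > \<tau>}) \<longrightarrow>
        x \<in> E \<and> N x = N y)"

definition has_fundamental_function ::
    "(real \<Rightarrow> real) set \<Rightarrow> ((real \<Rightarrow> real) \<Rightarrow> real) \<Rightarrow> (real \<Rightarrow> real) \<Rightarrow> bool" where
  "has_fundamental_function E N f \<longleftrightarrow>
     (\<forall>t\<in>{0<..1}. (indicator {0<..<t} :: real \<Rightarrow> real) \<in> E \<and> N (indicator {0<..<t}) = f t)"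

definition classG :: "(real \<Rightarrow> real) set" where
  "classG = {f. (\<forall>t\<in>{0<..1}. f t > 0) \<and> mono_on {0<..1} f \<and> concave_on {0<..1} f}"

definition dilation_function :: "(real \<Rightarrow> real) \<Rightarrow> real \<Rightarrow> real" where
  "dilation_function f t = Sup {f (s * t) / f s | s. 0 < s \<and> s \<le> min 1 (1 / t)}"

definition lower_dilation_index :: "(real \<Rightarrow> real) \<Rightarrow> real" where
  "lower_dilation_index f = Lim (at_right 0) (\<lambda>t. ln (dilation_function f t) / ln t)"

definition lin_combs :: "(nat \<Rightarrow> real \<Rightarrow> real) \<Rightarrow> (real \<Rightarrow> real) set" where
  "lin_combs xs = {(\<lambda>t. \<Sum>i<n. c i * xs i t) | n c. True}"

definition closed_span :: "(real \<Rightarrow> real) set \<Rightarrow> ((real \<Rightarrow> real) \<Rightarrow> real) \<Rightarrow> (nat \<Rightarrow> real \<Rightarrow> real) \<Rightarrow> (real \<Rightarrow> real) set" where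
  "closed_span E N xs = {x\<in>E. \<forall>e>0. \<exists>y\<in>lin_combs xs. N (\<lambda>t. x t - y t) < e}"

definition bounded_inclusion where
  "bounded_inclusion E NE F NF \<longleftrightarrow> E \<subseteq> F \<and> (\<exists>C. \<forall>x\<in>E. NF x \<le> C * NE x)"

text \<open>The inclusion E into F is disjointly strictly singular: there is no sequence of nonzero
  pairwise disjoint elements on whose closed linear span the inclusion is an isomorphism
  onto its image (i.e. bounded below).\<close>
definition inclusion_DSS where
  "inclusion_DSS E NE F NF \<longleftrightarrow>
     \<not> (\<exists>xs::nat \<Rightarrow> real \<Rightarrow> real.
          (\<forall>n. xs n \<in> E) \<and>
          (\<forall>n. \<not> (AE t in mu01. xs n t = 0)) \<and>
          (\<forall>m n. m \<noteq> n \<longrightarrow> (AE t in mu01. xs m t * xs n t = 0)) \<and>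
          (\<exists>c>0. \<forall>x\<in>closed_span E NE xs. NF x \<ge> c * NE x))"

end

theory Submission
  imports Defs
begin

lemma mu01_fin: "finite_measure mu01"
  by (rule finite_measure_lebesgue_on) simp

lemma mu01_emeas_fin: "emeasure mu01 A \<noteq> \<infinity>"
  using finite_measure.emeasure_finite[OF mu01_fin] by simp

lemma mu01_measure_le1: "measure mu01 A \<le> 1"
proof -
  interpret finite_measure mu01 by (rule mu01_fin)
  have "measure mu01 A \<le> measure mu01 (space mu01)" by (rule bounded_measure)
  also have "\<dots> = measure lebesgue {0..1::real}"
    by (subst measure_restrict_space) auto
  also have "\<dots> = 1" by simp
  finally show ?thesis .
qed

lemma mu01_measure_sub: "A \<subseteq> {0..1} \<Longrightarrow> A \<in> sets lebesgue \<Longrightarrow> measure mu01 A = measure lebesgue A"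
  by (subst measure_restrict_space) auto

context
  fixes E :: "(real \<Rightarrow> real) set" and N :: "(real \<Rightarrow> real) \<Rightarrow> real"
  assumes ss: "symmetric_space E N"
begin

lemma ssc1: "E \<subseteq> borel_measurable mu01"
  using ss unfolding symmetric_space_def by (elim conjE) assumption

lemma ssc2: "(\<lambda>t. 0) \<in> E"
  using ss unfolding symmetric_space_def by (elim conjE) assumption

lemma ssc3: "(\<forall>x\<in>E. \<forall>y\<in>E. (\<lambda>t. x t + y t) \<in> E)"
  using ss unfolding symmetric_space_def by (elim conjE) assumption

lemma ssc4: "(\<forall>x\<in>E. \<forall>c::real. (\<lambda>t. c * x t) \<in> E)"
  using ss unfolding symmetric_space_def by (elim conjE) assumption

lemma ssc5: "(\<forall>x\<in>E. \<forall>y\<in>E. N (\<lambda>t. x t + y t) \<le> N x + N y)"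
  using ss unfolding symmetric_space_def by (elim conjE) assumption

lemma ssc6: "(\<forall>x\<in>E. \<forall>c::real. N (\<lambda>t. c * x t) = \<bar>c\<bar> * N x)"
  using ss unfolding symmetric_space_def by (elim conjE) assumption

lemma ssc7: "(\<forall>x\<in>E. N x = 0 \<longleftrightarrow> (AE t in mu01. x t = 0))"
  using ss unfolding symmetric_space_def by (elim conjE) assumption

lemma ssc8: "(\<forall>u::nat \<Rightarrow> real \<Rightarrow> real. (\<forall>n. u n \<in> E) \<longrightarrow>
        (\<forall>e>0. \<exists>M. \<forall>m\<ge>M. \<forall>n\<ge>M. N (\<lambda>t. u m t - u n t) < e) \<longrightarrow>
        (\<exists>x\<in>E. (\<lambda>n. N (\<lambda>t. u n t - x t)) \<longlonglongrightarrow> 0))"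
  using ss unfolding symmetric_space_def by (elim conjE) assumption

lemma ssc9: "(\<forall>x y. y \<in> E \<longrightarrow> x \<in> borel_measurable mu01 \<longrightarrow>
        (AE t in mu01. \<bar>x t\<bar> \<le> \<bar>y t\<bar>) \<longrightarrow> x \<in> E \<and> N x \<le> N y)"
  using ss unfolding symmetric_space_def by (elim conjE) assumption

lemma ssc10: "(\<forall>x y. y \<in> E \<longrightarrow> x \<in> borel_measurable mu01 \<longrightarrow>
        (\<forall>\<tau>>0. measure mu01 {t\<in>{0..1}. \<bar>x t\<bar> > \<tau>} = measure mu01 {t\<in>{0..1}. \<bar>y t\<bar> > \<tau>}) \<longrightarrow>
        x \<in> E \<and> N x = N y)"
  using ss unfolding symmetric_space_def by (elim conjE) assumption

lemma ss_meas: "x \<in> E \<Longrightarrow> x \<in> borel_measurable mu01"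
  using ssc1 by auto

lemma ss_zero_in: "(\<lambda>t. 0) \<in> E"
  by (rule ssc2)

lemma ss_add: "x \<in> E \<Longrightarrow> y \<in> E \<Longrightarrow> (\<lambda>t. x t + y t) \<in> E"
  using ssc3 by blast

lemma ss_scale: "x \<in> E \<Longrightarrow> (\<lambda>t. c * x t) \<in> E"
  using ssc4 by blast

lemma ss_tri: "x \<in> E \<Longrightarrow> y \<in> E \<Longrightarrow> N (\<lambda>t. x t + y t) \<le> N x + N y"
  using ssc5 by blast

lemma ss_hom: "x \<in> E \<Longrightarrow> N (\<lambda>t. c * x t) = \<bar>c\<bar> * N x"
  using ssc6 by blast

lemma ss_null: "x \<in> E \<Longrightarrow> N x = 0 \<longleftrightarrow> (AE t in mu01. x t = 0)"
  using ssc7 by blast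

lemma ss_complete: "(\<forall>n. u n \<in> E) \<Longrightarrow>
        (\<forall>e>0. \<exists>M. \<forall>m\<ge>M. \<forall>n\<ge>M. N (\<lambda>t. u m t - u n t) < e) \<Longrightarrow>
        (\<exists>x\<in>E. (\<lambda>n. N (\<lambda>t. u n t - x t)) \<longlonglongrightarrow> 0)"
  using ssc8 by blast

lemma ss_ideal: "y \<in> E \<Longrightarrow> x \<in> borel_measurable mu01 \<Longrightarrow>
        (AE t in mu01. \<bar>x t\<bar> \<le> \<bar>y t\<bar>) \<Longrightarrow> x \<in> E \<and> N x \<le> N y"
  using ssc9 by blast

lemma ss_ri: "y \<in> E \<Longrightarrow> x \<in> borel_measurable mu01 \<Longrightarrow>
        (\<forall>\<tau>>0. measure mu01 {t\<in>{0..1}. \<bar>x t\<bar> > \<tau>} = measure mu01 {t\<in>{0..1}. \<bar>y t\<bar> > \<tau>}) \<Longrightarrow>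
        x \<in> E \<and> N x = N y"
  using ssc10 by blast

lemma ss_N0: "N (\<lambda>t. 0) = 0"
  using ss_hom[OF ss_zero_in, of 0] by simp

lemma ss_nonneg: "x \<in> E \<Longrightarrow> N x \<ge> 0"
proof -
  assume x: "x \<in> E"
  have a: "N (\<lambda>t. x t + (-1) * x t) \<le> N x + N (\<lambda>t. (-1) * x t)"
    by (rule ss_tri[OF x ss_scale[OF x]])
  have b: "(\<lambda>t. x t + (-1) * x t) = (\<lambda>t. 0)" by simp
  have c: "N (\<lambda>t. (-1) * x t) = N x" using ss_hom[OF x, of "-1"] by simp
  show ?thesis using a b c ss_N0 by simp
qed

lemma ss_diff: "x \<in> E \<Longrightarrow> y \<in> E \<Longrightarrow> (\<lambda>t. x t - y t) \<in> E"
  using ss_add[OF _ ss_scale[of y "-1"]] by simp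

lemma ss_diff_sym: "x \<in> E \<Longrightarrow> y \<in> E \<Longrightarrow> N (\<lambda>t. x t - y t) = N (\<lambda>t. y t - x t)"
proof -
  assume x: "x \<in> E" and y: "y \<in> E"
  have "N (\<lambda>t. (-1) * (x t - y t)) = N (\<lambda>t. x t - y t)"
    using ss_hom[OF ss_diff[OF x y], of "-1"] by simp
  moreover have "(\<lambda>t. (-1) * (x t - y t)) = (\<lambda>t. y t - x t)" by auto
  ultimately show ?thesis by simp
qed

lemma ss_sum: "finite I \<Longrightarrow> (\<forall>j\<in>I. f j \<in> E) \<Longrightarrow>
   (\<lambda>t. \<Sum>j\<in>I. f j t) \<in> E \<and> N (\<lambda>t. \<Sum>j\<in>I. f j t) \<le> (\<Sum>j\<in>I. N (f j))"
proof (induction I rule: finite_induct)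
  case empty
  then show ?case using ss_zero_in ss_N0 by simp
next
  case (insert a I)
  then have fa: "f a \<in> E" and IH: "(\<lambda>t. \<Sum>j\<in>I. f j t) \<in> E" "N (\<lambda>t. \<Sum>j\<in>I. f j t) \<le> (\<Sum>j\<in>I. N (f j))"
    by auto
  have "(\<lambda>t. \<Sum>j\<in>insert a I. f j t) = (\<lambda>t. f a t + (\<Sum>j\<in>I. f j t))"
    using insert by simp
  then show ?case using ss_add[OF fa IH(1)] ss_tri[OF fa IH(1)] IH(2) insert by simp
qed


lemma sets_mu01_sub: "A \<in> sets mu01 \<Longrightarrow> A \<subseteq> {0..1}"
  using sets.sets_into_space[of A mu01] by simp

lemma ss_ind_pos:
  assumes fund: "has_fundamental_function E N \<phi>" and A: "A \<in> sets mu01"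
    and pos: "measure mu01 A > 0"
  shows "(indicator A :: real \<Rightarrow> real) \<in> E \<and> N (indicator A) = \<phi> (measure mu01 A)"
proof -
  define a where "a = measure mu01 A"
  have a01: "a \<in> {0<..1}" using pos mu01_measure_le1[of A] unfolding a_def by auto
  have yE: "(indicator {0<..<a} :: real \<Rightarrow> real) \<in> E" and Ny: "N (indicator {0<..<a}) = \<phi> a"
    using fund a01 unfolding has_fundamental_function_def by auto
  have Asub: "A \<subseteq> {0..1}" using sets_mu01_sub[OF A] .
  have xm: "(indicator A :: real \<Rightarrow> real) \<in> borel_measurable mu01"
    using A by (rule borel_measurable_indicator)
  have Ia: "measure mu01 {0<..<a} = a"
  proof -
    have "measure mu01 {0<..<a} = measure lebesgue {0<..<a}"
      using a01 by (intro mu01_measure_sub) auto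
    also have "\<dots> = a" using a01 by simp
    finally show ?thesis .
  qed
  have "\<forall>\<tau>>0. measure mu01 {t\<in>{0..1}. \<bar>(indicator A :: real \<Rightarrow> real) t\<bar> > \<tau>} =
           measure mu01 {t\<in>{0..1}. \<bar>(indicator {0<..<a} :: real \<Rightarrow> real) t\<bar> > \<tau>}"
  proof (intro allI impI)
    fix \<tau> :: real assume "\<tau> > 0"
    show "measure mu01 {t\<in>{0..1}. \<bar>(indicator A :: real \<Rightarrow> real) t\<bar> > \<tau>} =
           measure mu01 {t\<in>{0..1}. \<bar>(indicator {0<..<a} :: real \<Rightarrow> real) t\<bar> > \<tau>}"
    proof (cases "\<tau> < 1")
      case True
      have e1: "{t\<in>{0..1}. \<bar>(indicator A :: real \<Rightarrow> real) t\<bar> > \<tau>} = A"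
        using True \<open>\<tau> > 0\<close> Asub by (auto simp: indicator_def)
      have e2: "{t\<in>{0..1}. \<bar>(indicator {0<..<a} :: real \<Rightarrow> real) t\<bar> > \<tau>} = {0<..<a}"
        using True \<open>\<tau> > 0\<close> a01 by (auto simp: indicator_def)
      show ?thesis unfolding e1 e2 Ia by (simp add: a_def)
    next
      case False
      have e1: "{t\<in>{0..1}. \<bar>(indicator A :: real \<Rightarrow> real) t\<bar> > \<tau>} = {}"
        using False by (auto simp: indicator_def)
      have e2: "{t\<in>{0..1}. \<bar>(indicator {0<..<a} :: real \<Rightarrow> real) t\<bar> > \<tau>} = {}"
        using False by (auto simp: indicator_def)
      show ?thesis unfolding e1 e2 ..
    qed
  qed
  from ss_ri[OF yE xm this] Ny show ?thesis unfolding a_def by simp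
qed

lemma ss_ind:
  assumes fund: "has_fundamental_function E N \<phi>" and A: "A \<in> sets mu01"
  shows "(\<lambda>t. c * indicator A t) \<in> E \<and>
     N (\<lambda>t. c * indicator A t) = \<bar>c\<bar> * (if measure mu01 A = 0 then 0 else \<phi> (measure mu01 A))"
proof (cases "measure mu01 A = 0")
  case True
  have "emeasure mu01 A = 0"
    using True by (simp add: finite_measure.emeasure_eq_measure[OF mu01_fin])
  then have "A \<in> null_sets mu01" using A by auto
  then have ae: "AE t in mu01. t \<notin> A" by (rule AE_not_in)
  have m: "(\<lambda>t. c * indicator A t :: real) \<in> borel_measurable mu01"
    using A by measurable
  have ae2: "AE t in mu01. \<bar>c * indicator A t :: real\<bar> \<le> \<bar>(\<lambda>t. 0::real) t\<bar>"
    using ae by eventually_elim simp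
  have inE: "(\<lambda>t. c * indicator A t) \<in> E" using ss_ideal[OF ss_zero_in m ae2] by simp
  have "AE t in mu01. c * indicator A t = (0::real)"
    using ae by eventually_elim simp
  then have "N (\<lambda>t. c * indicator A t) = 0" using ss_null[OF inE] by simp
  then show ?thesis using inE True by simp
next
  case False
  then have pos: "measure mu01 A > 0" using measure_nonneg[of mu01 A] by linarith
  from ss_ind_pos[OF fund A pos] have "indicator A \<in> E" "N (indicator A) = \<phi> (measure mu01 A)"
    by auto
  then show ?thesis using ss_scale[of "indicator A" c] ss_hom[of "indicator A" c] False by auto
qed

lemma ss_weak:
  assumes fund: "has_fundamental_function E N \<phi>" and A: "A \<in> sets mu01"
    and y: "y \<in> E" and c: "c \<ge> 0" and le: "\<forall>t\<in>A. c \<le> \<bar>y t\<bar>"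
  shows "c * (if measure mu01 A = 0 then 0 else \<phi> (measure mu01 A)) \<le> N y"
proof -
  have m: "(\<lambda>t. c * indicator A t :: real) \<in> borel_measurable mu01"
    using A by measurable
  have "AE t in mu01. \<bar>c * indicator A t :: real\<bar> \<le> \<bar>y t\<bar>"
    using le c by (intro AE_I2) (auto simp: indicator_def)
  from ss_ideal[OF y m this] ss_ind[OF fund A, of c] c show ?thesis by simp
qed

lemma ss_series:
  fixes f :: "nat \<Rightarrow> real \<Rightarrow> real"
  assumes f: "\<forall>j. f j \<in> E" and fnn: "\<forall>j t. f j t \<ge> 0"
    and bound: "\<forall>n. (\<Sum>j<n. N (f j)) \<le> K"
    and x: "x \<in> borel_measurable mu01"
    and cover: "\<forall>t\<in>{0..1}. \<exists>n. \<bar>x t\<bar> \<le> (\<Sum>j<n. f j t)"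
  shows "x \<in> E \<and> N x \<le> K"
proof -
  define S where "S n = (\<lambda>t. \<Sum>j<n. f j t)" for n
  have Nf: "N (f j) \<ge> 0" for j using ss_nonneg f by auto
  have SE: "S n \<in> E" for n using ss_sum[of "{..<n}" f] f unfolding S_def by simp
  have NS: "N (S n) \<le> K" for n
    using ss_sum[of "{..<n}" f] f bound[rule_format, of n] unfolding S_def by simp
  have diffle: "N (\<lambda>t. S m t - S n t) \<le> (\<Sum>j\<in>{n..<m}. N (f j))" if "n \<le> m" for m n
  proof -
    have "(\<lambda>t. S m t - S n t) = (\<lambda>t. \<Sum>j\<in>{n..<m}. f j t)"
      proof
      fix t
      show "S m t - S n t = (\<Sum>j\<in>{n..<m}. f j t)"
        unfolding S_def lessThan_atLeast0 using sum_diff_nat_ivl[of 0 n m "\<lambda>j. f j t"] that by simp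
    qed
    then show ?thesis using ss_sum[of "{n..<m}" f] f by simp
  qed
  have summ: "summable (\<lambda>j. N (f j))"
    by (rule summableI_nonneg_bounded[where x=K]) (use Nf bound in auto)
  have cauchy: "\<forall>e>0. \<exists>M. \<forall>m\<ge>M. \<forall>n\<ge>M. N (\<lambda>t. S m t - S n t) < e"
  proof (intro allI impI)
    fix e :: real assume "e > 0"
    from summ[unfolded summable_Cauchy] \<open>e > 0\<close> obtain M0 where
      M0: "\<forall>m\<ge>M0. \<forall>n. norm (\<Sum>j = m..<n. N (f j)) < e" by blast
    show "\<exists>M. \<forall>m\<ge>M. \<forall>n\<ge>M. N (\<lambda>t. S m t - S n t) < e"
    proof (intro exI allI impI)
      fix m n assume mM: "M0 \<le> m" and nM: "M0 \<le> n"
      show "N (\<lambda>t. S m t - S n t) < e"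
      proof (cases "n \<le> m")
        case True
        have "(\<Sum>j\<in>{n..<m}. N (f j)) < e" using M0[rule_format, OF nM, of m] by (simp add: abs_less_iff)
        then show ?thesis using diffle[OF True] by linarith
      next
        case False
        have "(\<Sum>j\<in>{m..<n}. N (f j)) < e" using M0[rule_format, OF mM, of n] by (simp add: abs_less_iff)
        then show ?thesis using diffle[of m n] False ss_diff_sym[OF SE SE, of m n] by simp
      qed
    qed
  qed
  from ss_complete[of S] SE cauchy obtain y where yE: "y \<in> E"
    and lim: "(\<lambda>n. N (\<lambda>t. S n t - y t)) \<longlonglongrightarrow> 0" by blast
  have ym: "y \<in> borel_measurable mu01" using ss_meas[OF yE] .
  have Sm: "S n \<in> borel_measurable mu01" for n using ss_meas[OF SE] .
  have Smono: "S m t \<le> S n t" if "m \<le> n" for m n t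
    unfolding S_def using that fnn by (intro sum_mono2) auto
  have aeS: "AE t in mu01. S m t \<le> y t" for m
  proof -
    define z where "z = (\<lambda>t. max (S m t - y t) 0)"
    have zm: "z \<in> borel_measurable mu01" unfolding z_def using Sm[of m] ym by measurable
    have zle: "z \<in> E \<and> N z \<le> N (\<lambda>t. S n t - y t)" if "m \<le> n" for n
    proof (rule ss_ideal[OF ss_diff[OF SE yE] zm])
      show "AE t in mu01. \<bar>z t\<bar> \<le> \<bar>S n t - y t\<bar>"
        proof (intro AE_I2)
        fix t
        have "S m t \<le> S n t" by (rule Smono[OF that])
        then show "\<bar>z t\<bar> \<le> \<bar>S n t - y t\<bar>" unfolding z_def by (simp add: abs_if max_def)
      qed
    qed
    have zE: "z \<in> E" using zle[of m] by simp
    have "N z \<le> 0"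
      using zle by (intro LIMSEQ_le_const[OF lim]) auto
    then have "N z = 0" using ss_nonneg[OF zE] by simp
    then have "AE t in mu01. z t = 0" using ss_null[OF zE] by simp
    then show ?thesis unfolding z_def by eventually_elim (auto simp: max_def split: if_splits)
  qed
  have "AE t in mu01. \<forall>m. S m t \<le> y t" using aeS by (simp add: AE_all_countable)
  then have ae: "AE t in mu01. \<bar>x t\<bar> \<le> \<bar>y t\<bar>"
    using AE_space
  proof eventually_elim
    case (elim t)
    have "t \<in> {0..1}" using elim by simp
    then obtain n where "\<bar>x t\<bar> \<le> S n t" using cover unfolding S_def by blast
    moreover have "S n t \<le> y t" using elim by blast
    ultimately show ?case by linarith
  qed
  from ss_ideal[OF yE x ae] have xE: "x \<in> E" and Nxy: "N x \<le> N y" by auto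
  have "N y \<le> K + N (\<lambda>t. S n t - y t)" for n
  proof -
    have "(\<lambda>t. S n t + (y t - S n t)) = y" by auto
    then have "N y \<le> N (S n) + N (\<lambda>t. y t - S n t)"
      using ss_tri[OF SE ss_diff[OF yE SE]] by metis
    then show ?thesis using NS[of n] ss_diff_sym[OF SE yE, of n] by simp
  qed
  moreover have "(\<lambda>n. K + N (\<lambda>t. S n t - y t)) \<longlonglongrightarrow> K + 0"
    by (intro tendsto_add tendsto_const lim)
  ultimately have "N y \<le> K + 0"
    by (intro LIMSEQ_le_const[of "\<lambda>n. K + N (\<lambda>t. S n t - y t)"]) auto
  then show ?thesis using xE Nxy by simp
qed
end



lemma classG_pos: "f \<in> classG \<Longrightarrow> t \<in> {0<..1} \<Longrightarrow> f t > 0"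
  unfolding classG_def by auto

lemma classG_mono: "f \<in> classG \<Longrightarrow> 0 < s \<Longrightarrow> s \<le> t \<Longrightarrow> t \<le> 1 \<Longrightarrow> f s \<le> f t"
  unfolding classG_def by (auto intro: mono_onD)

lemma concave_scale:
  assumes f: "f \<in> classG" and r: "0 < r" "r \<le> 1" and a: "0 < a" "a \<le> 1"
  shows "r * f a \<le> f (r * a)"
proof (cases "r = 1")
  case True then show ?thesis by simp
next
  case False
  then have r1: "r < 1" using r by simp
  have cc: "concave_on {0<..1} f" using f unfolding classG_def by auto
  have fa: "f a > 0" using classG_pos[OF f] a by auto
  have ra: "r * a < a" using mult_strict_right_mono[OF r1 a(1)] by simp
  have key: "(r - e / a) * f a \<le> f (r * a)" if e: "0 < e" "e < r * a" for e
  proof -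
    define l where "l = (r * a - e) / (a - e)"
    have ae: "a - e > 0" using e ra by simp
    have l0: "l \<ge> 0" unfolding l_def using e ae by simp
    have l1: "l \<le> 1" unfolding l_def using e ae ra r
      by (simp add: divide_le_eq_1)
    have la: "l * (a - e) = r * a - e" unfolding l_def using ae by simp
    have "(1 - l) * e + l * a = e + l * (a - e)" by (simp add: algebra_simps)
    then have eq: "(1 - l) *\<^sub>R e + l *\<^sub>R a = r * a" using la by simp
    have "f ((1 - l) *\<^sub>R e + l *\<^sub>R a) \<ge> (1 - l) * f e + l * f a"
      using concave_onD[OF cc, of l e a] l0 l1 e a r ra by auto
    moreover have "f e > 0" proof -
      have "e \<le> 1" using e ra a by linarith
      then show ?thesis using classG_pos[OF f] e by simp
    qed
    ultimately have "l * f a \<le> f (r * a)" using eq l1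
      by (smt (verit) mult_nonneg_nonneg)
    moreover have "r - e / a \<le> l"
    proof -
      have "(r * a - e) / a \<le> (r * a - e) / (a - e)"
        using e ae a by (intro divide_left_mono) (auto simp: mult_pos_pos)
      moreover have "(r * a - e) / a = r - e / a" using a by (simp add: field_simps)
      ultimately show ?thesis unfolding l_def by simp
    qed
    ultimately show ?thesis using fa by (smt (verit) mult_right_mono)
  qed
  show ?thesis
  proof (rule field_le_epsilon)
    fix d :: real assume d: "d > 0"
    define e where "e = min (r * a / 2) (d * a / f a)"
    have ra0: "r * a > 0" using a r by simp
    have e1: "e \<le> r * a / 2" unfolding e_def by (rule min.cobounded1)
    have e2: "0 < e" unfolding e_def using d a fa ra0 by simp
    have e0: "0 < e" "e < r * a" using e1 e2 ra0 by linarith+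
    have "(r - e / a) * f a \<le> f (r * a)" by (rule key[OF e0])
    moreover have "e / a * f a \<le> d"
    proof -
      have "e \<le> d * a / f a" unfolding e_def by simp
      then have "e * f a \<le> d * a" using fa by (simp add: pos_le_divide_eq)
      then show ?thesis using a by (simp add: field_simps)
    qed
    ultimately show "r * f a \<le> f (r * a) + d" by (simp add: algebra_simps)
  qed
qed


context
  fixes \<phi> \<psi> :: "real \<Rightarrow> real"
  assumes phiG: "\<phi> \<in> classG" and psiG: "\<psi> \<in> classG"
begin

abbreviation "hh \<equiv> (\<lambda>t. \<psi> t / \<phi> t)"
abbreviation "MM \<equiv> dilation_function hh"

lemma hh_pos: "0 < t \<Longrightarrow> t \<le> 1 \<Longrightarrow> hh t > 0"
  using classG_pos[OF phiG, of t] classG_pos[OF psiG, of t] by simp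

lemma hh_elem: assumes s: "0 < s" "s \<le> 1" and t: "0 < t" "t \<le> 1"
  shows "hh (s * t) / hh s \<le> 1 / t"
proof -
  have st: "0 < s * t" "s * t \<le> s" "s * t \<le> 1" using s t by (auto simp: mult_left_le mult_le_one)
  have p1: "\<psi> (s * t) \<le> \<psi> s" using classG_mono[OF psiG st(1) st(2) s(2)] .
  have p2: "t * \<phi> s \<le> \<phi> (s * t)" using concave_scale[OF phiG t s] by (simp add: mult.commute)
  have pos: "\<psi> (s * t) > 0" "\<phi> (s * t) > 0" "\<psi> s > 0" "\<phi> s > 0"
    using classG_pos[OF psiG] classG_pos[OF phiG] st s by auto
  have "\<psi> (s * t) * (t * \<phi> s) \<le> \<psi> s * \<phi> (s * t)"
    using p1 p2 pos t by (intro mult_mono) auto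
  then show ?thesis using pos t by (simp add: field_simps)
qed

lemma hh_elem_pos: "0 < s \<Longrightarrow> s \<le> 1 \<Longrightarrow> 0 < t \<Longrightarrow> t \<le> 1 \<Longrightarrow> hh (s * t) / hh s > 0"
  by (rule divide_pos_pos) (use hh_pos[of "s * t"] hh_pos[of s] mult_le_one[of s t] in auto)

lemma Dset_eq: "0 < t \<Longrightarrow> t \<le> 1 \<Longrightarrow>
  {hh (s * t) / hh s | s. 0 < s \<and> s \<le> min 1 (1 / t)} = {hh (s * t) / hh s | s. 0 < s \<and> s \<le> 1}"
  by (simp add: min_def)

lemma MM_ge: assumes s: "0 < s" "s \<le> 1" and t: "0 < t" "t \<le> 1"
  shows "hh (s * t) / hh s \<le> MM t"
proof -
  have "bdd_above {hh (s * t) / hh s | s. 0 < s \<and> s \<le> 1}"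
    using hh_elem t by (auto intro!: bdd_aboveI[where M="1/t"])
  then show ?thesis unfolding dilation_function_def Dset_eq[OF t] using s
    by (intro cSup_upper) auto
qed

lemma MM_le: assumes t: "0 < t" "t \<le> 1" and B: "\<And>s. 0 < s \<Longrightarrow> s \<le> 1 \<Longrightarrow> hh (s * t) / hh s \<le> B"
  shows "MM t \<le> B"
  unfolding dilation_function_def Dset_eq[OF t]
proof (rule cSup_least)
  have "hh (1 * t) / hh 1 \<in> {hh (s * t) / hh s | s. 0 < s \<and> s \<le> 1}"
    by (rule CollectI, rule exI[of _ 1]) simp
  then show "{hh (s * t) / hh s | s. 0 < s \<and> s \<le> 1} \<noteq> {}" by blast
qed (use B in auto)

lemma MM_upper: "0 < t \<Longrightarrow> t \<le> 1 \<Longrightarrow> MM t \<le> 1 / t"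
  using MM_le hh_elem by blast

lemma MM_lower: assumes t: "0 < t" "t \<le> 1" shows "t \<le> MM t"
proof -
  have "hh (1 * t) / hh 1 \<le> MM t" using MM_ge[of 1 t] t by simp
  moreover have "t \<le> hh t / hh 1"
  proof -
    have a: "t * \<psi> 1 \<le> \<psi> t" using concave_scale[OF psiG t, of 1] by simp
    have b: "\<phi> t \<le> \<phi> 1" using classG_mono[OF phiG t(1) t(2)] by simp
    have pos: "\<psi> t > 0" "\<phi> t > 0" "\<psi> 1 > 0" "\<phi> 1 > 0"
      using classG_pos[OF psiG] classG_pos[OF phiG] t by auto
    have "t * \<psi> 1 * \<phi> t \<le> \<psi> t * \<phi> 1"
      using a b pos t by (intro mult_mono) auto
    then show ?thesis using pos by (simp add: field_simps)
  qed
  ultimately show ?thesis by simp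
qed

lemma MM_pos: "0 < t \<Longrightarrow> t \<le> 1 \<Longrightarrow> 0 < MM t"
  using MM_lower[of t] by simp

lemma MM_submult: fixes x y :: real assumes x: "0 < x" "x \<le> 1" and y: "0 < y" "y \<le> 1"
  shows "MM (x * y) \<le> MM x * MM y"
proof (rule MM_le)
  show "0 < x * y" "x * y \<le> 1" using x y by (auto simp: mult_le_one)
  fix s :: real assume s: "0 < s" "s \<le> 1"
  have sx: "0 < s * x" "s * x \<le> 1" using s x by (auto simp: mult_le_one)
  have "hh (s * (x * y)) / hh s = (hh ((s * x) * y) / hh (s * x)) * (hh (s * x) / hh s)"
  proof -
    have hsx: "hh (s * x) \<noteq> 0" using hh_pos[OF sx] by (metis less_irrefl)
    have gen: "\<And>A B C::real. B \<noteq> 0 \<Longrightarrow> A / C = (A / B) * (B / C)" by simp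
    show ?thesis unfolding mult.assoc by (rule gen[OF hsx])
  qed
  also have "\<dots> \<le> MM y * MM x"
    using MM_ge[OF sx y] MM_ge[OF s x] hh_elem_pos[OF sx y] hh_elem_pos[OF s x]
    by (intro mult_mono) auto
  finally show "hh (s * (x * y)) / hh s \<le> MM x * MM y" by (simp add: mult.commute)
qed

lemma MM_pow: fixes t0 r :: real assumes t0: "0 < t0" "t0 \<le> 1" and r: "0 < r" "r \<le> 1"
  shows "MM (t0 ^ n * r) \<le> MM t0 ^ n * MM r"
proof (induction n)
  case 0 then show ?case by simp
next
  case (Suc n)
  have z: "0 < t0 ^ n * r" "t0 ^ n * r \<le> 1" using t0 r by (auto simp: mult_le_one power_le_one)
  have "MM (t0 ^ Suc n * r) = MM (t0 * (t0 ^ n * r))" by (simp add: mult.assoc)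
  also have "\<dots> \<le> MM t0 * MM (t0 ^ n * r)" by (rule MM_submult[OF t0 z])
  also have "\<dots> \<le> MM t0 * (MM t0 ^ n * MM r)"
    using Suc MM_pos[OF t0] by (intro mult_left_mono) auto
  finally show ?case by (simp add: mult.assoc)
qed


abbreviation "GG \<equiv> (\<lambda>t. ln (MM t) / ln t)"

lemma GG_le1: assumes t: "0 < t" "t < 1" shows "GG t \<le> 1"
proof -
  have "ln t \<le> ln (MM t)" using MM_lower[of t] t by simp
  moreover have "ln t < 0" using t by simp
  ultimately show ?thesis by (simp add: divide_le_eq)
qed

lemma GG_lower:
  assumes t0: "0 < t0" "t0 < 1" and t: "0 < t" "t \<le> t0"
  shows "GG t0 - (\<bar>GG t0\<bar> + 1) * (- ln t0) / (- ln t) \<le> GG t"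
proof -
  define a where "a = - ln t0"
  define u where "u = - ln t"
  define G0 where "G0 = GG t0"
  have a0: "a > 0" unfolding a_def using t0 by simp
  have ua: "a \<le> u" unfolding a_def u_def using t t0 by simp
  define n where "n = nat \<lfloor>u / a\<rfloor>"
  have ua1: "u / a \<ge> 1" using ua a0 by simp
  have rn: "real n = of_int \<lfloor>u / a\<rfloor>" unfolding n_def using ua1 by simp
  have n1: "real n \<le> u / a" using rn by linarith
  have n2: "u / a < real n + 1" using rn by linarith
  define \<rho> where "\<rho> = u - real n * a"
  have \<rho>0: "0 \<le> \<rho>" unfolding \<rho>_def using n1 a0 by (simp add: le_divide_eq)
  have \<rho>a: "\<rho> < a" unfolding \<rho>_def using n2 a0 by (simp add: divide_less_eq algebra_simps)
  define r where "r = exp (- \<rho>)"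
  have r: "0 < r" "r \<le> 1" unfolding r_def using \<rho>0 by auto
  have t0e: "exp (- a) = t0" unfolding a_def using t0 by simp
  have teq: "t = t0 ^ n * r"
  proof -
    have "t = exp (- u)" unfolding u_def using t by simp
    also have "- u = real n * (- a) + (- \<rho>)" unfolding \<rho>_def by simp
    also have "exp (real n * (- a) + (- \<rho>)) = exp (- a) ^ n * r"
      unfolding r_def by (simp only: exp_add exp_of_nat_mult)
    finally show ?thesis using t0e by simp
  qed
  have t01: "0 < t0" "t0 \<le> 1" using t0 by auto
  have M0: "MM t0 > 0" using MM_pos[OF t01] .
  have "MM t \<le> MM t0 ^ n * MM r" unfolding teq by (rule MM_pow[OF t01 r])
  also have "\<dots> \<le> MM t0 ^ n * (1 / r)"
    using MM_upper[OF r] M0 by (intro mult_left_mono) auto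
  finally have Mt0: "MM t \<le> MM t0 ^ n * (1 / r)" .
  have ir: "1 / r = exp \<rho>" unfolding r_def exp_minus by (simp add: divide_inverse)
  have Mt: "MM t \<le> MM t0 ^ n * exp \<rho>" using Mt0 unfolding ir .
  have Mtp: "MM t > 0" using MM_pos[of t] t t0 by simp
  have "ln (MM t) \<le> ln (MM t0 ^ n * exp \<rho>)" using Mt Mtp by simp
  also have "\<dots> = real n * ln (MM t0) + \<rho>" using M0 by (simp add: ln_mult ln_realpow)
  also have "ln (MM t0) = - a * G0" unfolding G0_def a_def using t0 by simp
  finally have lnM: "ln (MM t) \<le> - (real n * a) * G0 + \<rho>" by simp
  have u0: "u > 0" using ua a0 by simp
  have lnt: "ln t = - u" unfolding u_def by simp
  have GGt: "GG t = ln (MM t) / (- u)" using lnt by simp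
  have "(real n * a * G0 - \<rho>) / u \<le> GG t"
    unfolding GGt using lnM u0 by (simp add: divide_le_eq le_divide_eq field_simps)
  moreover have "G0 - (\<bar>G0\<bar> + 1) * a / u \<le> (real n * a * G0 - \<rho>) / u"
  proof -
    have na: "real n * a = u - \<rho>" unfolding \<rho>_def by simp
    have "\<rho> * (G0 + 1) \<le> \<rho> * (\<bar>G0\<bar> + 1)" using \<rho>0 by (intro mult_left_mono) auto
    also have "\<dots> \<le> a * (\<bar>G0\<bar> + 1)" using \<rho>a by (intro mult_right_mono) auto
    finally have key: "\<rho> * (G0 + 1) \<le> a * (\<bar>G0\<bar> + 1)" .
    have "G0 * u - (\<bar>G0\<bar> + 1) * a \<le> real n * a * G0 - \<rho>"
      unfolding na using key by (simp add: algebra_simps)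
    then have "(G0 * u - (\<bar>G0\<bar> + 1) * a) / u \<le> (real n * a * G0 - \<rho>) / u"
      using u0 by (intro divide_right_mono) auto
    moreover have "G0 - (\<bar>G0\<bar> + 1) * a / u = (G0 * u - (\<bar>G0\<bar> + 1) * a) / u"
      using u0 by (simp add: field_simps)
    ultimately show ?thesis by simp
  qed
  ultimately show ?thesis unfolding G0_def a_def u_def by simp
qed

lemma GG_tendsto: "(GG \<longlongrightarrow> Sup (GG ` {0<..<1})) (at_right 0)"
proof (rule order_tendstoI)
  define S where "S = Sup (GG ` {0<..<1})"
  have bdd: "bdd_above (GG ` {0<..<1})" using GG_le1 by (auto intro!: bdd_aboveI[where M=1])
  fix b assume "Sup (GG ` {0<..<1}) < b"
  then have Sb: "S < b" unfolding S_def .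
  show "eventually (\<lambda>t. GG t < b) (at_right 0)"
    unfolding eventually_at_right_field
  proof (intro exI[of _ 1] conjI allI impI)
    fix t :: real assume "0 < t" "t < 1"
    then have "GG t \<le> S" unfolding S_def by (intro cSup_upper bdd) auto
    then show "GG t < b" using Sb by simp
  qed simp
next
  fix a assume aS: "a < Sup (GG ` {0<..<1})"
  then obtain t0 where t0: "t0 \<in> {0<..<1}" and at0: "a < GG t0"
    by (auto elim!: less_cSupE)
  define e where "e = GG t0 - a"
  define K where "K = (\<bar>GG t0\<bar> + 1) * (- ln t0)"
  have e0: "e > 0" unfolding e_def using at0 by simp
  have k1: "0 < \<bar>GG t0\<bar> + 1" using abs_ge_zero[of "GG t0"] by linarith
  have k2: "0 < - ln t0" using t0 by simp
  have K0: "K > 0" unfolding K_def using k1 k2 by (rule mult_pos_pos)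
  show "eventually (\<lambda>t. a < GG t) (at_right 0)"
    unfolding eventually_at_right_field
  proof (intro exI[of _ "min t0 (exp (- K / e))"] conjI allI impI)
    show "0 < min t0 (exp (- K / e))" using t0 by simp
    fix t :: real assume t: "0 < t" "t < min t0 (exp (- K / e))"
    have "ln t < ln (exp (- K / e))" using t by (intro ln_less_cancel_iff[THEN iffD2]) auto
    then have lt: "K / e < - ln t" by simp
    have "K < e * (- ln t)" using lt e0 by (simp add: divide_less_eq mult.commute)
    then have "K / (- ln t) < e" using lt K0 e0
      by (smt (verit) divide_less_eq divide_pos_pos)
    moreover have "GG t0 - K / (- ln t) \<le> GG t"
      using GG_lower[of t0 t] t0 t unfolding K_def by simp
    ultimately show "a < GG t" unfolding e_def by simp
  qed
qed

lemma dil_bound: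
  assumes pos: "lower_dilation_index hh > 0"
  shows "\<exists>C \<delta>. \<delta> > 0 \<and> C > 0 \<and> (\<forall>a. 0 < a \<longrightarrow> a \<le> 1 \<longrightarrow> hh a \<le> C * a powr \<delta>)"
proof -
  define S where "S = Sup (GG ` {0<..<1})"
  have lim: "(GG \<longlongrightarrow> S) (at_right 0)" unfolding S_def by (rule GG_tendsto)
  have "lower_dilation_index hh = S"
    unfolding lower_dilation_index_def
    by (rule tendsto_Lim[OF trivial_limit_at_right_real lim])
  then have S0: "S > 0" using pos by simp
  define \<delta> where "\<delta> = S / 2"
  have d0: "\<delta> > 0" and dS: "\<delta> < S" unfolding \<delta>_def using S0 by auto
  have "eventually (\<lambda>t. \<delta> < GG t) (at_right 0)" using order_tendstoD(1)[OF lim dS] .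
  then obtain b where b0: "b > 0" and bb: "\<And>t. t > 0 \<Longrightarrow> t < b \<Longrightarrow> \<delta> < GG t"
    unfolding eventually_at_right_field by auto
  define b1 where "b1 = min (b / 2) (1 / 2)"
  have b1: "0 < b1" "b1 < b" "b1 < 1" unfolding b1_def using b0 by auto
  define C where "C = max (hh 1) (\<psi> 1 / (\<phi> b1 * b1 powr \<delta>))"
  have h1: "hh 1 > 0" using hh_pos[of 1] by simp
  have C0: "C > 0" unfolding C_def using h1 by simp
  have "hh a \<le> C * a powr \<delta>" if a: "0 < a" "a \<le> 1" for a
  proof (cases "a \<le> b1")
    case True
    have ab: "a < b" "a < 1" using True b1 by auto
    have "\<delta> < ln (MM a) / ln a" using bb[OF a(1) ab(1)] .
    moreover have "ln a < 0" using a ab by simp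
    ultimately have "ln (MM a) < \<delta> * ln a" by (simp add: less_divide_eq)
    moreover have "MM a > 0" using MM_pos a by simp
    ultimately have "MM a < exp (\<delta> * ln a)" by (metis exp_less_cancel_iff exp_ln)
    then have Ma: "MM a < a powr \<delta>" using a by (simp add: powr_def)
    have gen: "\<And>x y M::real. y > 0 \<Longrightarrow> x / y \<le> M \<Longrightarrow> x \<le> y * M"
      by (simp add: divide_le_eq mult.commute)
    have "hh (1 * a) / hh 1 \<le> MM a" by (rule MM_ge) (use a in auto)
    then have "hh a / hh 1 \<le> MM a" by (simp only: mult_1)
    then have "hh a \<le> hh 1 * MM a" by (rule gen[OF h1])
    also have "\<dots> \<le> hh 1 * a powr \<delta>" using Ma h1 by (intro mult_left_mono) auto
    also have "\<dots> \<le> C * a powr \<delta>" unfolding C_def by (intro mult_right_mono) auto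
    finally show ?thesis .
  next
    case False
    have p1: "\<psi> a \<le> \<psi> 1" using classG_mono[OF psiG a(1) a(2)] by simp
    have p2: "\<phi> b1 \<le> \<phi> a" using classG_mono[OF phiG b1(1)] False a by simp
    have pb: "\<phi> b1 > 0" "\<psi> a > 0" using classG_pos[OF phiG] classG_pos[OF psiG] b1 a by auto
    have "hh a \<le> \<psi> 1 / \<phi> b1"
      using p1 p2 pb by (intro frac_le) auto
    also have "\<dots> = (\<psi> 1 / (\<phi> b1 * b1 powr \<delta>)) * b1 powr \<delta>"
      using b1 pb by simp
    also have "\<dots> \<le> C * a powr \<delta>"
    proof (intro mult_mono)
      show "\<psi> 1 / (\<phi> b1 * b1 powr \<delta>) \<le> C" unfolding C_def by simp
      show "b1 powr \<delta> \<le> a powr \<delta>" using False b1 d0 by (intro powr_mono2) auto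
      show "0 \<le> C" using C0 by simp
      show "0 \<le> b1 powr \<delta>" by simp
    qed
    finally show ?thesis .
  qed
  then show ?thesis using d0 C0 by blast
qed
end


lemma sets_mu01_pred: "y \<in> borel_measurable mu01 \<Longrightarrow> {t\<in>{0..1}. P (y t)} \<in> sets mu01"
  if "Measurable.pred borel P" for P :: "real \<Rightarrow> bool"
proof -
  assume ym: "y \<in> borel_measurable mu01"
  have "{t\<in>space mu01. P (y t)} \<in> sets mu01" using ym that by measurable
  then show ?thesis by simp
qed

lemma main_bound:
  fixes E F :: "(real \<Rightarrow> real) set" and NE NF :: "(real \<Rightarrow> real) \<Rightarrow> real"
    and \<phi> \<psi> :: "real \<Rightarrow> real"
  assumes phiG: "\<phi> \<in> classG" and psiG: "\<psi> \<in> classG"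
    and ssE: "symmetric_space E NE" and fE: "has_fundamental_function E NE \<phi>"
    and ssF: "symmetric_space F NF" and fF: "has_fundamental_function F NF \<psi>"
    and hC: "\<forall>a. 0 < a \<longrightarrow> a \<le> 1 \<longrightarrow> \<psi> a / \<phi> a \<le> C * a powr \<delta>"
    and d0: "\<delta> > 0" and C0: "C > 0"
    and y: "y \<in> E" and Ny: "NE y \<le> 1" and m: "0 < m" "m \<le> 1"
    and supp: "measure mu01 {t\<in>{0..1}. y t \<noteq> 0} \<le> m"
  shows "y \<in> F \<and> NF y \<le> C * m powr \<delta> * (1 + 2 / (1 - (1/2) powr \<delta>))"
proof -
  have ym: "y \<in> borel_measurable mu01" using ss_meas[OF ssE y] .
  define lam where "lam = 1 / \<phi> m"
  have phm: "\<phi> m > 0" using classG_pos[OF phiG] m by auto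
  have lam0: "lam > 0" unfolding lam_def using phm by simp
  define S where "S = {t\<in>{0..1}. y t \<noteq> 0}"
  define A where "A i = {t\<in>{0..1}. \<bar>y t\<bar> > lam * 2 ^ i}" for i :: nat
  have Sm: "S \<in> sets mu01" unfolding S_def by (rule sets_mu01_pred[OF _ ym]) measurable
  have Am: "A i \<in> sets mu01" for i unfolding A_def by (rule sets_mu01_pred[OF _ ym]) measurable
  define q where "q = (1/2::real) powr \<delta>"
  have q0: "0 < q" "q < 1" unfolding q_def
    using powr_less_mono2[OF d0, of "1/2" 1] by auto
  define B where "B = C * m powr \<delta>"
  have B0: "B \<ge> 0" unfolding B_def using C0 by simp
  define f where "f j = (case j of 0 \<Rightarrow> (\<lambda>t. lam * indicator S t)
      | Suc i \<Rightarrow> (\<lambda>t. (lam * 2 ^ Suc i) * indicator (A i) t))" for j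
  have f0: "f 0 = (\<lambda>t. lam * indicator S t)" unfolding f_def by simp
  have fS: "f (Suc i) = (\<lambda>t. (lam * 2 ^ Suc i) * indicator (A i) t)" for i unfolding f_def by simp
  have fF': "f j \<in> F" for j
    by (cases j) (auto simp: f0 fS intro: ss_ind[OF ssF fF Sm, THEN conjunct1] ss_ind[OF ssF fF Am, THEN conjunct1])
  have fnn: "\<forall>j t. f j t \<ge> 0"
  proof (intro allI)
    fix j t show "f j t \<ge> 0" using lam0 by (cases j) (auto simp: f0 fS)
  qed
  have hCa: "\<psi> a \<le> C * a powr \<delta> * \<phi> a" if "0 < a" "a \<le> 1" for a
  proof -
    have "\<phi> a > 0" using classG_pos[OF phiG] that by auto
    then show ?thesis using hC that by (simp add: divide_le_eq)
  qed
  have Nf0: "NF (f 0) \<le> B"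
  proof -
    have eq: "NF (f 0) = lam * (if measure mu01 S = 0 then 0 else \<psi> (measure mu01 S))"
      using ss_ind[OF ssF fF Sm, of lam] lam0 unfolding f0 by simp
    show ?thesis
    proof (cases "measure mu01 S = 0")
      case True then show ?thesis using eq B0 by simp
    next
      case False
      then have Sp: "measure mu01 S > 0" using measure_nonneg[of mu01 S] by linarith
      have "\<psi> (measure mu01 S) \<le> \<psi> m" using classG_mono[OF psiG Sp] supp m unfolding S_def by simp
      then have "lam * \<psi> (measure mu01 S) \<le> lam * \<psi> m" using lam0 by simp
      also have "lam * \<psi> m = \<psi> m / \<phi> m" unfolding lam_def by simp
      also have "\<dots> \<le> B" unfolding B_def using hC m by simp
      finally show ?thesis using eq False by simp
    qed
  qed
  have NfS: "NF (f (Suc i)) \<le> 2 * B * q ^ i" for i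
  proof -
    define a where "a = measure mu01 (A i)"
    have eq: "NF (f (Suc i)) = lam * 2 ^ Suc i * (if a = 0 then 0 else \<psi> a)"
      using ss_ind[OF ssF fF Am, of "lam * 2 ^ Suc i"] lam0 unfolding fS a_def by simp
    have rhs0: "0 \<le> 2 * B * q ^ i" using B0 q0 by simp
    show ?thesis
    proof (cases "a = 0")
      case True then show ?thesis using eq rhs0 by simp
    next
      case False
      then have a0: "a > 0" using measure_nonneg[of mu01 "A i"] unfolding a_def by linarith
      have a1: "a \<le> 1" unfolding a_def by (rule mu01_measure_le1)
      have weak: "lam * 2 ^ i * \<phi> a \<le> 1"
      proof -
        have "lam * 2 ^ i * (if a = 0 then 0 else \<phi> a) \<le> NE y"
          unfolding a_def using lam0
          by (intro ss_weak[OF ssE fE Am y]) (auto simp: A_def)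
        then show ?thesis using Ny False by simp
      qed
      have l2: "lam * 2 ^ i > 0" using lam0 by simp
      have AS: "A i \<subseteq> S" unfolding A_def S_def using l2 by force
      have am: "a \<le> m"
      proof -
        have "a \<le> measure mu01 S" unfolding a_def
          using finite_measure.finite_measure_mono[OF mu01_fin AS Sm] .
        then show ?thesis using supp unfolding S_def by simp
      qed
      have ai: "a \<le> m / 2 ^ i"
      proof -
        have r: "0 < a / m" "a / m \<le> 1" using a0 am m by auto
        have "a / m * \<phi> m \<le> \<phi> (a / m * m)" by (rule concave_scale[OF phiG r m])
        then have c1: "a / m * \<phi> m \<le> \<phi> a" using m by simp
        have "\<phi> a \<le> 1 / (lam * 2 ^ i)" using weak lam0 by (simp add: le_divide_eq mult.commute)
        also have "\<dots> = \<phi> m / 2 ^ i" unfolding lam_def by simp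
        finally have "a / m * \<phi> m \<le> \<phi> m / 2 ^ i" using c1 by simp
        then have "a / m * \<phi> m \<le> 1 / 2 ^ i * \<phi> m" by simp
        then have "a / m \<le> 1 / 2 ^ i" using phm by (rule mult_right_le_imp_le)
        then show ?thesis using m by (simp add: field_simps)
      qed
      have pow: "a powr \<delta> \<le> m powr \<delta> * q ^ i"
      proof -
        have "a powr \<delta> \<le> (m * (1/2) ^ i) powr \<delta>"
          using ai a0 d0 by (intro powr_mono2) (auto simp: field_simps)
        also have "\<dots> = m powr \<delta> * ((1/2) ^ i) powr \<delta>" by (rule powr_mult)
        also have "((1/2::real) ^ i) powr \<delta> = q ^ i"
        proof -
          have "((1/2::real) ^ i) powr \<delta> = ((1/2) powr (real i)) powr \<delta>" by (simp add: powr_realpow)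
          also have "\<dots> = (1/2) powr (real i * \<delta>)" by (rule powr_powr)
          also have "\<dots> = q ^ i" unfolding q_def by (subst powr_power) auto
          finally show ?thesis .
        qed
        finally show ?thesis .
      qed
      have "NF (f (Suc i)) = 2 * (lam * 2 ^ i) * \<psi> a" using eq False by simp
      also have "\<dots> \<le> 2 * (lam * 2 ^ i) * (C * a powr \<delta> * \<phi> a)"
        using hCa[OF a0 a1] lam0 by (intro mult_left_mono) auto
      also have "\<dots> = 2 * C * a powr \<delta> * (lam * 2 ^ i * \<phi> a)" by (simp add: algebra_simps)
      also have "\<dots> \<le> 2 * C * a powr \<delta> * 1"
        using weak C0 by (intro mult_left_mono) auto
      also have "\<dots> \<le> 2 * C * (m powr \<delta> * q ^ i)"
        using pow C0 by simp
      also have "\<dots> = 2 * B * q ^ i" unfolding B_def by simp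
      finally show ?thesis .
    qed
  qed
  define K where "K = B * (1 + 2 / (1 - q))"
  have bound: "\<forall>n. (\<Sum>j<n. NF (f j)) \<le> K"
  proof
    fix n
    show "(\<Sum>j<n. NF (f j)) \<le> K"
    proof (cases n)
      case 0 then show ?thesis unfolding K_def using B0 q0 by simp
    next
      case (Suc k)
      have "(\<Sum>j<n. NF (f j)) = NF (f 0) + (\<Sum>i<k. NF (f (Suc i)))"
        unfolding Suc by (rule sum.lessThan_Suc_shift)
      also have "\<dots> \<le> B + (\<Sum>i<k. 2 * B * q ^ i)"
        using Nf0 NfS by (intro add_mono sum_mono) auto
      also have "(\<Sum>i<k. 2 * B * q ^ i) = 2 * B * ((1 - q ^ k) / (1 - q))"
        using q0 by (simp add: sum_distrib_left[symmetric] sum_gp_strict)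
      also have "\<dots> \<le> 2 * B * (1 / (1 - q))"
        using q0 B0 by (intro mult_left_mono divide_right_mono) auto
      finally show ?thesis unfolding K_def by (simp add: algebra_simps)
    qed
  qed
  have cover: "\<forall>t\<in>{0..1}. \<exists>n. \<bar>y t\<bar> \<le> (\<Sum>j<n. f j t)"
  proof
    fix t :: real assume t: "t \<in> {0..1}"
    show "\<exists>n. \<bar>y t\<bar> \<le> (\<Sum>j<n. f j t)"
    proof (cases "y t = 0")
      case True then show ?thesis by (intro exI[of _ 0]) simp
    next
      case False
      then have tS: "t \<in> S" unfolding S_def using t by simp
      have ind: "\<bar>y t\<bar> \<le> lam * 2 ^ k \<Longrightarrow> \<bar>y t\<bar> \<le> (\<Sum>j<Suc k. f j t)" for k
      proof (induction k)
        case 0 then show ?case using tS by (simp add: f0)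
      next
        case (Suc k)
        have split: "(\<Sum>j<Suc (Suc k). f j t) = (\<Sum>j<Suc k. f j t) + f (Suc k) t" by simp
        show ?case
        proof (cases "\<bar>y t\<bar> \<le> lam * 2 ^ k")
          case True
          then show ?thesis using Suc.IH fnn split by (smt (verit))
        next
          case False
          then have "t \<in> A k" unfolding A_def using t by simp
          then have "f (Suc k) t = lam * 2 ^ Suc k" by (simp add: fS)
          moreover have "(\<Sum>j<Suc k. f j t) \<ge> 0" using fnn by (simp add: sum_nonneg)
          ultimately show ?thesis using Suc.prems split by simp
        qed
      qed
      obtain k where "\<bar>y t\<bar> / lam < 2 ^ k" using real_arch_pow[of 2 "\<bar>y t\<bar> / lam"] by auto
      then have "\<bar>y t\<bar> \<le> lam * 2 ^ k" using lam0 by (simp add: divide_less_eq mult.commute)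
      then show ?thesis using ind by blast
    qed
  qed
  have res: "y \<in> F \<and> NF y \<le> K"
    by (rule ss_series[OF ssF _ fnn bound ym cover]) (use fF' in auto)
  then show ?thesis unfolding K_def B_def q_def by simp
qed

lemma small_support:
  fixes X :: "nat \<Rightarrow> real set"
  assumes X: "\<And>n. X n \<in> sets mu01"
    and dis: "\<And>m n. m \<noteq> n \<Longrightarrow> (AE t in mu01. \<not> (t \<in> X m \<and> t \<in> X n))"
    and e: "e > 0"
  shows "\<exists>n. measure mu01 (X n) < e"
proof (rule ccontr)
  assume "\<not> (\<exists>n. measure mu01 (X n) < e)"
  then have ge: "\<And>n. e \<le> measure mu01 (X n)" by (simp add: not_less)
  obtain N :: nat where N: "1 < real N * e" using ex_less_of_nat_mult[OF e, of 1] by auto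
  have null2: "X n \<inter> X i \<in> null_sets mu01" if "i \<noteq> n" for i n
  proof -
    have "X n \<inter> X i \<in> sets mu01" using X by auto
    moreover have "{t \<in> space mu01. \<not> \<not> (t \<in> X n \<and> t \<in> X i)} = X n \<inter> X i"
      using sets.sets_into_space[OF X[of n]] by auto
    ultimately have "emeasure mu01 (X n \<inter> X i) = 0"
      using AE_iff_measurable[of "X n \<inter> X i" mu01 "\<lambda>t. \<not> (t \<in> X n \<and> t \<in> X i)"] dis[of n i] that
      by auto
    then show ?thesis using X by auto
  qed
  have Dm: "measure mu01 (disjointed X n) = measure mu01 (X n)" for n
  proof -
    have "(\<Union>i\<in>{0..<n}. X n \<inter> X i) \<in> null_sets mu01"
      by (rule null_sets_UN') (use null2 in auto)
    then have "measure mu01 (X n - (\<Union>i\<in>{0..<n}. X n \<inter> X i)) = measure mu01 (X n)"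
      using X by (intro measure_Diff_null_set) auto
    moreover have "X n - (\<Union>i\<in>{0..<n}. X n \<inter> X i) = disjointed X n"
      unfolding disjointed_def by auto
    ultimately show ?thesis by simp
  qed
  have Ds: "disjointed X n \<in> sets mu01" for n
    unfolding disjointed_def using X by (intro sets.Diff sets.finite_UN) auto
  have "(\<Sum>n<N. measure mu01 (disjointed X n)) = measure mu01 (\<Union>n<N. disjointed X n)"
    by (rule measure_finite_Union[symmetric])
       (use mu01_emeas_fin in \<open>auto simp: Ds top_unique intro: disjoint_family_on_mono[OF _ disjoint_family_disjointed]\<close>)
  also have "\<dots> \<le> 1" by (rule mu01_measure_le1)
  finally have s1: "(\<Sum>n<N. measure mu01 (X n)) \<le> 1" by (simp add: Dm)
  have "real N * e \<le> (\<Sum>n<N. measure mu01 (X n))"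
    using sum_mono[of "{..<N}" "\<lambda>n. e" "\<lambda>n. measure mu01 (X n)"] ge by simp
  then show False using s1 N by simp
qed

theorem theorem5:
  fixes E F :: "(real \<Rightarrow> real) set" and NE NF :: "(real \<Rightarrow> real) \<Rightarrow> real"
    and \<phi> \<psi> :: "real \<Rightarrow> real"
  assumes "\<phi> \<in> classG" and "\<psi> \<in> classG"
    and "lower_dilation_index (\<lambda>t. \<psi> t / \<phi> t) > 0"
    and "symmetric_space E NE" and "has_fundamental_function E NE \<phi>"
    and "symmetric_space F NF" and "has_fundamental_function F NF \<psi>"
  shows "E \<subseteq> F \<and> bounded_inclusion E NE F NF \<and> inclusion_DSS E NE F NF"
proof -
  note phiG = assms(1) and psiG = assms(2) and ssE = assms(4) and fE = assms(5)
    and ssF = assms(6) and fF = assms(7)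
  obtain C \<delta> where d0: "\<delta> > 0" and C0: "C > 0"
    and hC: "\<forall>a. 0 < a \<longrightarrow> a \<le> 1 \<longrightarrow> \<psi> a / \<phi> a \<le> C * a powr \<delta>"
    using dil_bound[OF phiG psiG assms(3)] by blast
  define Q where "Q = 1 + 2 / (1 - (1/2::real) powr \<delta>)"
  have q1: "(1/2::real) powr \<delta> < 1" using powr_less_mono2[OF d0, of "1/2" 1] by simp
  have Q0: "Q > 0" unfolding Q_def using q1 by (simp add: add_pos_nonneg)
  have MB: "y \<in> F \<and> NF y \<le> C * m powr \<delta> * Q"
    if "y \<in> E" "NE y \<le> 1" "0 < m" "m \<le> 1" "measure mu01 {t\<in>{0..1}. y t \<noteq> 0} \<le> m" for y m
    using main_bound[OF phiG psiG ssE fE ssF fF hC d0 C0 that] unfolding Q_def by simp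
  have scale: "(\<lambda>t. (1 / NE x) * x t) \<in> E \<and> NE (\<lambda>t. (1 / NE x) * x t) = 1 \<and>
      {t\<in>{0..1}. (1 / NE x) * x t \<noteq> 0} = {t\<in>{0..1}. x t \<noteq> 0} \<and>
      x = (\<lambda>t. NE x * ((1 / NE x) * x t))"
    if "x \<in> E" "NE x > 0" for x
  proof -
    have a: "(\<lambda>t. (1 / NE x) * x t) \<in> E" by (rule ss_scale[OF ssE that(1)])
    have b: "NE (\<lambda>t. (1 / NE x) * x t) = 1" using ss_hom[OF ssE that(1), of "1 / NE x"] that(2) by simp
    have c: "{t\<in>{0..1}. (1 / NE x) * x t \<noteq> 0} = {t\<in>{0..1}. x t \<noteq> 0}" using that(2) by auto
    have d: "x = (\<lambda>t. NE x * ((1 / NE x) * x t))" using that(2) by auto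
    show ?thesis using a b c d by blast
  qed
  have part1: "x \<in> F \<and> NF x \<le> C * Q * NE x" if x: "x \<in> E" for x
  proof (cases "NE x = 0")
    case True
    then have ae: "AE t in mu01. x t = 0" using ss_null[OF ssE x] by simp
    have "AE t in mu01. \<bar>x t\<bar> \<le> \<bar>(\<lambda>t. 0::real) t\<bar>" using ae by eventually_elim simp
    from ss_ideal[OF ssF ss_zero_in[OF ssF] ss_meas[OF ssE x] this]
    show ?thesis using True ss_N0[OF ssF] by simp
  next
    case False
    then have r: "NE x > 0" using ss_nonneg[OF ssE x] by simp
    define y where "y = (\<lambda>t. (1 / NE x) * x t)"
    have yE: "y \<in> E" and Ny: "NE y = 1" and xy: "x = (\<lambda>t. NE x * y t)"
      using scale[OF x r] unfolding y_def by auto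
    have "y \<in> F \<and> NF y \<le> C * 1 powr \<delta> * Q"
      using MB[OF yE _ _ _ mu01_measure_le1] Ny by simp
    then have yF: "y \<in> F" and NFy: "NF y \<le> C * Q" by auto
    have "(\<lambda>t. NE x * y t) \<in> F" by (rule ss_scale[OF ssF yF])
    moreover have "NF (\<lambda>t. NE x * y t) = NE x * NF y" using ss_hom[OF ssF yF] r by simp
    moreover have "NE x * NF y \<le> NE x * (C * Q)" using NFy r by (intro mult_left_mono) auto
    ultimately have "x \<in> F" "NF x \<le> NE x * (C * Q)" using xy by simp_all
    then show ?thesis by (simp add: mult.commute)
  qed
  have sub: "E \<subseteq> F" using part1 by auto
  have bi: "bounded_inclusion E NE F NF"
    unfolding bounded_inclusion_def using sub part1 by blast
  have dss: "inclusion_DSS E NE F NF"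
    unfolding inclusion_DSS_def
  proof
    assume "\<exists>xs. (\<forall>n. xs n \<in> E) \<and> (\<forall>n. \<not> (AE t in mu01. xs n t = 0)) \<and>
          (\<forall>m n. m \<noteq> n \<longrightarrow> (AE t in mu01. xs m t * xs n t = 0)) \<and>
          (\<exists>c>0. \<forall>x\<in>closed_span E NE xs. NF x \<ge> c * NE x)"
    then obtain xs c where xsE: "\<forall>n. xs n \<in> E" and nz: "\<forall>n. \<not> (AE t in mu01. xs n t = 0)"
      and dj: "\<forall>m n. m \<noteq> n \<longrightarrow> (AE t in mu01. xs m t * xs n t = 0)"
      and c0: "c > 0" and cs: "\<forall>x\<in>closed_span E NE xs. NF x \<ge> c * NE x" by blast
    define m where "m = min 1 ((c / (2 * C * Q)) powr (1 / \<delta>))"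
    have cq: "c / (2 * C * Q) > 0" using c0 C0 Q0 by simp
    have m0: "0 < m" "m \<le> 1" unfolding m_def using cq by auto
    have mpow: "m powr \<delta> \<le> c / (2 * C * Q)"
    proof -
      have "m powr \<delta> \<le> ((c / (2 * C * Q)) powr (1 / \<delta>)) powr \<delta>"
        unfolding m_def using m0 d0 by (intro powr_mono2) (auto simp: m_def)
      also have "\<dots> = c / (2 * C * Q)" using d0 cq c0 C0 Q0 by (simp add: powr_powr)
      finally show ?thesis .
    qed
    have Km: "C * m powr \<delta> * Q \<le> c / 2"
    proof -
      have "C * m powr \<delta> * Q = (C * Q) * m powr \<delta>" by simp
      also have "\<dots> \<le> (C * Q) * (c / (2 * C * Q))" using mpow C0 Q0 by (intro mult_left_mono) auto
      also have "\<dots> = c / 2" using C0 Q0 by simp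
      finally show ?thesis .
    qed
    define X where "X n = {t\<in>{0..1}. xs n t \<noteq> 0}" for n
    have Xm: "X n \<in> sets mu01" for n
      unfolding X_def by (rule sets_mu01_pred[OF _ ss_meas[OF ssE xsE[rule_format]]]) measurable
    have Xd: "AE t in mu01. \<not> (t \<in> X a \<and> t \<in> X b)" if "a \<noteq> b" for a b
      using dj[rule_format, OF that] by eventually_elim (auto simp: X_def)
    have "\<exists>n. measure mu01 (X n) < m"
      by (rule small_support[of X, OF Xm Xd m0(1)])
    then obtain n where n: "measure mu01 (X n) < m" by (elim exE)
    have xn: "xs n \<in> E" using xsE by simp
    have ne: "NE (xs n) \<noteq> 0" using ss_null[OF ssE xn] nz by simp
    have r: "NE (xs n) > 0" using ne ss_nonneg[OF ssE xn] by simp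
    define y where "y = (\<lambda>t. (1 / NE (xs n)) * xs n t)"
    have sc: "y \<in> E \<and> NE y = 1 \<and> {t\<in>{0..1}. y t \<noteq> 0} = X n \<and> xs n = (\<lambda>t. NE (xs n) * y t)"
      using scale[OF xn r] unfolding y_def X_def .
    have yE: "y \<in> E" using conjunct1[OF sc] .
    have Ny: "NE y = 1" using conjunct1[OF conjunct2[OF sc]] .
    have ys: "{t\<in>{0..1}. y t \<noteq> 0} = X n" using conjunct1[OF conjunct2[OF conjunct2[OF sc]]] .
    have xy: "xs n = (\<lambda>t. NE (xs n) * y t)" using conjunct2[OF conjunct2[OF conjunct2[OF sc]]] .
    have "y \<in> F \<and> NF y \<le> C * m powr \<delta> * Q"
      using MB[OF yE _ m0] Ny ys n by simp
    then have yF: "y \<in> F" and NFy: "NF y \<le> c / 2" using Km by auto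
    have NFx: "NF (xs n) = NE (xs n) * NF y"
      using ss_hom[OF ssF yF, of "NE (xs n)"] r unfolding xy[symmetric] by simp
    have span: "xs n \<in> closed_span E NE xs"
      unfolding closed_span_def
    proof (intro CollectI conjI xn allI impI)
      fix e :: real assume e: "e > 0"
      have l: "(\<lambda>t. \<Sum>i<Suc n. (if i = n then 1 else 0) * xs i t) \<in> lin_combs xs"
        unfolding lin_combs_def
        by (intro CollectI exI[of _ "Suc n"] exI[of _ "\<lambda>i. if i = n then (1::real) else 0"]) simp
      have "(\<lambda>t. \<Sum>i<Suc n. (if i = n then 1 else 0) * xs i t) = xs n"
        by (simp add: if_distrib)
      then have "xs n \<in> lin_combs xs" using l by simp
      moreover have "NE (\<lambda>t. xs n t - xs n t) < e" using ss_N0[OF ssE] e by simp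
      ultimately show "\<exists>y\<in>lin_combs xs. NE (\<lambda>t. xs n t - y t) < e" by blast
    qed
    have "NF (xs n) \<ge> c * NE (xs n)" using cs span by blast
    moreover have "NF (xs n) \<le> NE (xs n) * (c / 2)" using NFx NFy r by (simp add: mult_left_mono)
    moreover have "c * NE (xs n) > 0" using r c0 by simp
    moreover have "NE (xs n) * (c / 2) = (c * NE (xs n)) / 2" by simp
    ultimately show False by linarith
  qed
  show ?thesis using sub bi dss by blast
qed
end
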